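(* Let $\mu$ be an $E_2$-invariant Borel probability measure on $\mathbb{T}$ with $\mathrm{supp}(\mu)\subset F$ for some flower $F$ for $E_2$, and let $P$ be the petal of $F$ containing $0$. If $\mu(P)>0$, then $\mu(\{0\})>0$.
   Context: $\mathbb{T}=\mathbb{R}/\mathbb{Z}$, $E_2(x)=2x\bmod1$. A preimage selector for $E_2$ is a map $\eta:\mathbb{T}\to\mathbb{T}$ with $E_2(\eta(x))=x$ for all $x$, having finitely many discontinuities, each a jump discontinuity (both one-sided limits exist, differ, and one equals the value). A flower is $\overline{\eta(\mathbb{T})}$ for a preimage selector $\eta$; its connected components (closed intervals) are its petals. *)

theory Defs
  imports "HOL-Analysis.Analysis" "HOL-Probability.Probability"
begin

text \<open>The circle T = R/Z is modelled as the unit circle in the complex plane,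
  via the homeomorphism t mod 1 \<mapsto> exp(2 pi i t). Under this identification
  0 \<in> T corresponds to 1, and E_2(x) = 2x mod 1 corresponds to z \<mapsto> z^2.\<close>

definition circ :: "complex set" where
  "circ = sphere 0 1"

definition cpar :: "real \<Rightarrow> complex" where
  "cpar t = cis (2 * pi * t)"

definition E2 :: "complex \<Rightarrow> complex" where
  "E2 z = z ^ 2"

definition discont :: "(complex \<Rightarrow> complex) \<Rightarrow> complex set" where
  "discont \<eta> = {x \<in> circ. \<not> continuous (at x within circ) \<eta>}"

definition jump_at :: "(complex \<Rightarrow> complex) \<Rightarrow> complex \<Rightarrow> bool" where
  "jump_at \<eta> x \<longleftrightarrow> (\<forall>t. cpar t = x \<longrightarrow>
     (\<exists>L R. ((\<eta> \<circ> cpar) \<longlongrightarrow> L) (at_left t) \<and> ((\<eta> \<circ> cpar) \<longlongrightarrow> R) (at_right t)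
            \<and> L \<noteq> R \<and> (\<eta> x = L \<or> \<eta> x = R)))"

definition preimage_selector :: "(complex \<Rightarrow> complex) \<Rightarrow> bool" where
  "preimage_selector \<eta> \<longleftrightarrow>
     \<eta> ` circ \<subseteq> circ \<and> (\<forall>x\<in>circ. E2 (\<eta> x) = x) \<and>
     finite (discont \<eta>) \<and> (\<forall>x\<in>discont \<eta>. jump_at \<eta> x)"

definition flower :: "complex set \<Rightarrow> bool" where
  "flower F \<longleftrightarrow> (\<exists>\<eta>. preimage_selector \<eta> \<and> F = closure (\<eta> ` circ))"

definition support :: "'a::topological_space measure \<Rightarrow> 'a set" where
  "support M = {x \<in> space M. \<forall>U. open U \<and> x \<in> U \<longrightarrow> emeasure M (U \<inter> space M) > 0}"

end

theory Submission
  imports Defs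
begin

lemma cpar_circ[simp]: "cpar t \<in> circ"
  by (simp add: cpar_def circ_def)

lemma cpar_nz[simp]: "cpar t \<noteq> 0"
  by (simp add: cpar_def)

lemma cpar_eq_int: "cpar x = cpar y \<Longrightarrow> \<exists>k::int. x - y = of_int k"
proof -
  assume "cpar x = cpar y"
  then have "exp (\<i> * complex_of_real (2*pi*x)) = exp (\<i> * complex_of_real (2*pi*y))"
    by (simp add: cpar_def cis_conv_exp)
  then obtain n::int where n: "\<i> * complex_of_real (2*pi*x) = \<i> * complex_of_real (2*pi*y) + complex_of_real (real_of_int (2 * n) * pi) * \<i>"
    using exp_eq by blast
  then have "\<i> * complex_of_real (2*pi*x) = \<i> * complex_of_real (2*pi*y + real_of_int (2 * n) * pi)"
    by (simp add: algebra_simps)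
  then have "complex_of_real (2*pi*x) = complex_of_real (2*pi*y + real_of_int (2 * n) * pi)"
    by simp
  then have "2*pi*x = 2*pi*y + real_of_int (2 * n) * pi" using of_real_eq_iff by blast
  then have "2*pi*(x - y - of_int n) = 0" by (simp add: algebra_simps)
  then have "x - y = of_int n" by simp
  then show ?thesis by blast
qed

lemma cpar_inj: "cpar x = cpar y \<Longrightarrow> \<bar>x - y\<bar> < 1 \<Longrightarrow> x = y"
proof -
  assume a: "cpar x = cpar y" "\<bar>x - y\<bar> < 1"
  then obtain k::int where k: "x - y = of_int k" using cpar_eq_int by blast
  with a have "\<bar>of_int k::real\<bar> < 1" by simp
  then have "k = 0" by linarith
  with k show ?thesis by simp
qed

lemma cpar_add_int: "cpar (x + of_int k) = cpar x"
proof -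
  have "cpar (x + of_int k) = cis (2*pi*x + 2*pi* of_int k)" by (simp add: cpar_def algebra_simps)
  also have "\<dots> = cis (2*pi*x) * cis (2*pi* of_int k)" by (simp add: cis_mult[symmetric])
  also have "cis (2*pi* of_int k) = 1" using cos_int_2pin[of k] sin_int_2pin[of k] by (simp add: cis.ctr complex_eq_iff)
  finally show ?thesis by (simp add: cpar_def)
qed

lemma cpar_plus1: "cpar (x + 1) = cpar x"
  using cpar_add_int[of x 1] by simp

lemma cpar_minus1: "cpar (x - 1) = cpar x"
  using cpar_add_int[of x "-1"] by simp

lemma cpar_0[simp]: "cpar 0 = 1" by (simp add: cpar_def)

lemma cpar_sq: "E2 (cpar x) = cpar (2*x)"
proof -
  have "cpar x ^ 2 = cis (2*pi*x + 2*pi*x)" unfolding cpar_def power2_eq_square by (rule cis_mult)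
  then show ?thesis by (simp add: E2_def cpar_def)
qed

lemma cpar_half: "cpar (x + 1/2) = - cpar x"
proof -
  have "cpar (x + 1/2) = cis (2*pi*x + pi)" by (simp add: cpar_def algebra_simps)
  also have "\<dots> = - cis (2*pi*x)" by (simp add: cis.ctr complex_eq_iff)
  finally show ?thesis by (simp add: cpar_def)
qed

lemma cpar_exp: "cpar = (\<lambda>t. exp (\<i> * complex_of_real (2*pi*t)))"
  by (rule ext) (simp add: cpar_def cis_conv_exp)

lemma cpar_cont[continuous_intros]: "continuous_on S cpar"
  unfolding cpar_exp by (intro continuous_intros)

lemma cpar_tendsto: "(cpar \<longlongrightarrow> cpar x) (at x within S)"
proof -
  have "continuous (at x within S) cpar" unfolding cpar_exp by (intro continuous_intros)
  then show ?thesis by (simp add: continuous_within)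
qed

lemma circ_cpar: assumes "z \<in> circ" shows "\<exists>t. u \<le> t \<and> t < u + 1 \<and> z = cpar t"
proof -
  have z0: "z \<noteq> 0" and nz: "norm z = 1" using assms by (auto simp: circ_def)
  define t0 where "t0 = Arg z / (2*pi)"
  have "cpar t0 = cis (Arg z)" by (simp add: cpar_def t0_def)
  also have "\<dots> = sgn z" using z0 cis_Arg by blast
  also have "\<dots> = z" using nz by (simp add: sgn_div_norm)
  finally have e: "cpar t0 = z" .
  define t where "t = t0 - of_int (floor (t0 - u))"
  have "cpar t = z" using e cpar_add_int[of t0 "- floor (t0 - u)"] by (simp add: t_def)
  moreover have "u \<le> t" "t < u + 1" unfolding t_def by linarith+
  ultimately show ?thesis by blast
qed

lemma E2_cont[continuous_intros]: "continuous_on S E2"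
  unfolding E2_def by (intro continuous_intros)

lemma lemA:
  assumes ps: "preimage_selector \<eta>" and w: "w \<in> closure (\<eta> ` circ)"
    and cont: "continuous (at (E2 w) within circ) \<eta>"
  shows "\<eta> (E2 w) = w"
proof -
  from w obtain g where g: "\<forall>n. g n \<in> \<eta> ` circ" "g \<longlonglongrightarrow> w" using closure_sequential by blast
  have gx: "\<forall>n. E2 (g n) \<in> circ \<and> \<eta> (E2 (g n)) = g n"
  proof
    fix n
    from g(1) obtain x where x: "x \<in> circ" "g n = \<eta> x" by blast
    with ps have "E2 (g n) = x" by (simp add: preimage_selector_def)
    with x show "E2 (g n) \<in> circ \<and> \<eta> (E2 (g n)) = g n" by simp
  qed
  have lim: "(\<lambda>n. E2 (g n)) \<longlonglongrightarrow> E2 w" using g(2) unfolding E2_def by (intro tendsto_intros)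
  have "(\<eta> \<circ> (\<lambda>n. E2 (g n))) \<longlonglongrightarrow> \<eta> (E2 w)"
    using cont[unfolded continuous_within_sequentially, rule_format, of "\<lambda>n. E2 (g n)"] gx lim by blast
  then have "g \<longlonglongrightarrow> \<eta> (E2 w)" using gx by (simp add: o_def)
  with g(2) show ?thesis using LIMSEQ_unique by blast
qed

lemma cpar_isCont: "isCont cpar x"
  using cpar_cont[of UNIV] continuous_on_eq_continuous_at[of UNIV cpar] by simp

lemma lemB:
  assumes ps: "preimage_selector \<eta>"
    and sub: "\<forall>r. u < r \<and> r < v \<longrightarrow> cpar r \<in> closure (\<eta> ` circ)"
    and s: "u < s" "s < v"
  shows "cpar (2 * s) \<notin> discont \<eta>"
proof
  assume xd: "cpar (2 * s) \<in> discont \<eta>"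
  have fin: "finite (discont \<eta>)" and jumps: "\<forall>x\<in>discont \<eta>. jump_at \<eta> x"
    using ps by (auto simp: preimage_selector_def)
  have ev1: "\<forall>\<^sub>F t in at (2 * s). 2 * u < t \<and> t < 2 * v"
    using s by (intro eventually_conj order_tendstoD[OF tendsto_ident_at]) auto
  have ev2: "\<forall>\<^sub>F t in at (2 * s). \<forall>d\<in>discont \<eta>. cpar t \<noteq> d"
  proof (rule eventually_ball_finite[OF fin], rule ballI)
    fix d assume "d \<in> discont \<eta>"
    show "\<forall>\<^sub>F t in at (2 * s). cpar t \<noteq> d"
    proof (cases "d = cpar (2 * s)")
      case True
      have "\<forall>\<^sub>F t in at (2 * s). t \<noteq> 2 * s \<and> dist t (2 * s) < 1"
        unfolding eventually_at by (intro exI[of _ 1]) auto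
      then show ?thesis
      proof (rule eventually_mono)
        fix t assume "t \<noteq> 2 * s \<and> dist t (2 * s) < 1"
        then show "cpar t \<noteq> d" using cpar_inj[of t "2 * s"] True by (auto simp: dist_real_def)
      qed
    next
      case False
      have "(cpar \<longlongrightarrow> cpar (2 * s)) (at (2 * s))" using cpar_tendsto[of "2 * s" UNIV] by simp
      from tendsto_imp_eventually_ne[OF this] False show ?thesis by auto
    qed
  qed
  have ev: "\<forall>\<^sub>F t in at (2 * s). (\<eta> \<circ> cpar) t = cpar (t/2)"
    using ev1 ev2
  proof eventually_elim
    case (elim t)
    have w: "cpar (t/2) \<in> closure (\<eta>`circ)" using sub elim by auto
    have e: "E2 (cpar (t/2)) = cpar t" by (simp add: cpar_sq)
    have "cpar t \<notin> discont \<eta>" using elim by auto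
    then have "continuous (at (cpar t) within circ) \<eta>" by (auto simp: discont_def)
    then have "\<eta> (E2 (cpar (t/2))) = cpar (t/2)" using lemA[OF ps w] e by simp
    then show ?case using e by simp
  qed
  have "((\<lambda>t. t/2) \<longlongrightarrow> s) (at (2 * s))" by (auto intro!: tendsto_eq_intros)
  then have lim: "((\<lambda>t. cpar (t/2)) \<longlongrightarrow> cpar s) (at (2 * s))"
    using isCont_tendsto_compose[OF cpar_isCont] by blast
  have lim2: "((\<eta> \<circ> cpar) \<longlongrightarrow> cpar s) (at (2 * s))" using tendsto_cong[OF ev] lim by (simp add: o_def)
  then have lL: "((\<eta> \<circ> cpar) \<longlongrightarrow> cpar s) (at_left (2 * s))"
    and lR: "((\<eta> \<circ> cpar) \<longlongrightarrow> cpar s) (at_right (2 * s))"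
    using filterlim_at_split by auto
  from jumps xd have "jump_at \<eta> (cpar (2 * s))" by blast
  then obtain L R where LR: "((\<eta> \<circ> cpar) \<longlongrightarrow> L) (at_left (2 * s))"
    "((\<eta> \<circ> cpar) \<longlongrightarrow> R) (at_right (2 * s))" "L \<noteq> R"
    unfolding jump_at_def by blast
  have "L = cpar s" using tendsto_unique[OF trivial_limit_at_left_real LR(1) lL] .
  moreover have "R = cpar s" using tendsto_unique[OF trivial_limit_at_right_real LR(2) lR] .
  ultimately show False using LR(3) by simp
qed

lemma lemC:
  assumes ps: "preimage_selector \<eta>"
    and sub: "\<forall>r. u < r \<and> r < v \<longrightarrow> cpar r \<in> closure (\<eta> ` circ)"
    and s: "u < s" "s < v"
  shows "- cpar s \<notin> closure (\<eta> ` circ)"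
proof
  assume m: "- cpar s \<in> closure (\<eta> ` circ)"
  have nd: "cpar (2 * s) \<notin> discont \<eta>" by (rule lemB[OF ps sub s])
  have c: "continuous (at (cpar (2 * s)) within circ) \<eta>" using nd by (auto simp: discont_def)
  have e2: "E2 (cpar s) = cpar (2 * s)" by (rule cpar_sq)
  then have e1: "E2 (- cpar s) = cpar (2 * s)" by (simp add: E2_def)
  have h1: "\<eta> (cpar (2 * s)) = - cpar s" using lemA[OF ps m] c e1 by simp
  have cs: "cpar s \<in> closure (\<eta> ` circ)" using sub s by auto
  have h2: "\<eta> (cpar (2 * s)) = cpar s" using lemA[OF ps cs] c e2 by auto
  from h1 h2 have "cpar s = - cpar s" by simp
  then show False using cpar_nz[of s] by simp
qed

lemma circ_borel: "circ \<in> sets borel"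
  unfolding circ_def by (simp add: borel_closed)

lemma sets_M_iff: "sets M = sets (restrict_space borel circ) \<Longrightarrow> X \<in> sets M \<longleftrightarrow> X \<subseteq> circ \<and> X \<in> sets borel"
  using sets_restrict_space_iff[of circ borel X] circ_borel by simp

lemma sq_eq_cases: "(z::complex)^2 = w^2 \<Longrightarrow> z = w \<or> z = - w"
proof -
  assume "z^2 = w^2"
  then have "(z - w) * (z + w) = 0" by (simp add: algebra_simps power2_eq_square)
  then show ?thesis by (auto simp: add_eq_0_iff)
qed

lemma side_null:
  fixes M :: "complex measure" and F :: "complex set" and \<sigma> b :: real
  assumes P: "prob_space M" and sM: "sets M = sets (restrict_space borel circ)" and spM: "space M = circ"
    and inv: "\<forall>A\<in>sets M. measure M (E2 -` A \<inter> space M) = measure M A"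
    and nullF: "circ - F \<in> null_sets M"
    and sig: "\<sigma> = 1 \<or> \<sigma> = -1" and b: "0 < b" "b \<le> 1/2"
    and H: "\<forall>s. 0 < s \<and> s < b \<longrightarrow> - cpar (\<sigma> *  s) \<notin> F"
  shows "(\<lambda>r. cpar (\<sigma> * r)) ` {0<..b} \<in> null_sets M"
proof -
  interpret prob_space M by fact
  define A where "A c = (\<lambda>r. cpar (\<sigma> * r)) ` {0<..c}" for c
  have sabs: "\<bar>\<sigma>\<bar> = 1" using sig by auto
  have inj: "r = r'" if "0 \<le> r" "r < 1" "0 \<le> r'" "r' < 1" "cpar (\<sigma> * r) = cpar (\<sigma> * r')" for r r'
  proof -
    have "\<bar>\<sigma> * r - \<sigma> * r'\<bar> = \<bar>r - r'\<bar>" using sabs by (simp add: right_diff_distrib[symmetric] abs_mult)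
    also have "\<dots> < 1" using that by auto
    finally have "\<sigma> * r = \<sigma> * r'" using cpar_inj that(5) by blast
    then show ?thesis using sig by auto
  qed
  have contc: "continuous_on S (\<lambda>r. cpar (\<sigma> * r))" for S
    unfolding cpar_exp by (intro continuous_intros)
  have meas: "A c \<in> sets M" if "0 < c" "c < 1" for c
  proof -
    have eq: "A c = (\<lambda>r. cpar (\<sigma> * r)) ` {0..c} - {1}"
    proof
      show "A c \<subseteq> (\<lambda>r. cpar (\<sigma> * r)) ` {0..c} - {1}"
      proof
        fix z assume "z \<in> A c"
        then obtain r where r: "0 < r" "r \<le> c" "z = cpar (\<sigma> * r)" by (auto simp: A_def)
        have "z \<noteq> 1"
        proof
          assume "z = 1"
          then have "cpar (\<sigma> * r) = cpar (\<sigma> * 0)" using r by simp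
          then have "r = 0" using inj[of r 0] r that by simp
          then show False using r by simp
        qed
        then show "z \<in> (\<lambda>r. cpar (\<sigma> * r)) ` {0..c} - {1}" using r by auto
      qed
    next
      show "(\<lambda>r. cpar (\<sigma> * r)) ` {0..c} - {1} \<subseteq> A c"
      proof
        fix z assume "z \<in> (\<lambda>r. cpar (\<sigma> * r)) ` {0..c} - {1}"
        then obtain r where r: "0 \<le> r" "r \<le> c" "z = cpar (\<sigma> * r)" "z \<noteq> 1" by auto
        then have "r \<noteq> 0" by auto
        then show "z \<in> A c" using r by (auto simp: A_def)
      qed
    qed
    have "compact ((\<lambda>r. cpar (\<sigma> * r)) ` {0..c})"
      by (intro compact_continuous_image contc compact_Icc)
    then have "(\<lambda>r. cpar (\<sigma> * r)) ` {0..c} - {1} \<in> sets borel"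
      by (intro sets.Diff borel_closed compact_imp_closed) auto
    moreover have "A c \<subseteq> circ" by (auto simp: A_def)
    ultimately show ?thesis using eq sets_M_iff[OF sM] by auto
  qed
  have E2m: "E2 \<in> borel_measurable borel" by (intro borel_measurable_continuous_onI E2_cont)
  have E2meas: "E2 -` X \<inter> circ \<in> sets M" if "X \<in> sets M" for X
  proof -
    have "X \<in> sets borel" using that sets_M_iff[OF sM] by auto
    then have "E2 -` X \<inter> space borel \<in> sets borel" using measurable_sets[OF E2m] by blast
    then have "E2 -` X \<inter> circ \<in> sets borel" using circ_borel by auto
    then show ?thesis using sets_M_iff[OF sM] by auto
  qed
  have pre: "E2 -` A c \<inter> circ \<subseteq> A (c/2) \<union> (circ - F)" if "0 < c" "c \<le> b" for c
  proof
    fix z assume z: "z \<in> E2 -` A c \<inter> circ"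
    then obtain r where r: "0 < r" "r \<le> c" "E2 z = cpar (\<sigma> * r)" by (auto simp: A_def)
    define w where "w = cpar (\<sigma> * (r/2))"
    have "E2 w = cpar (2 * (\<sigma> * (r/2)))" unfolding w_def by (rule cpar_sq)
    then have "E2 w = E2 z" using r by simp
    then have "z = w \<or> z = - w" using sq_eq_cases by (auto simp: E2_def)
    then show "z \<in> A (c/2) \<union> (circ - F)"
    proof
      assume zw: "z = w"
      have "r/2 \<in> {0<..c/2}" using r by auto
      then have "w \<in> A (c/2)" unfolding A_def w_def by (rule imageI)
      then show ?thesis using zw by simp
    next
      assume "z = - w"
      moreover have "- w \<notin> F" unfolding w_def using H[rule_format, of "r/2"] r that by auto
      ultimately show ?thesis using z by auto
    qed
  qed
  have pre2: "A (c/2) \<subseteq> E2 -` A c \<inter> circ" if "0 < c" for c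
  proof
    fix z assume "z \<in> A (c/2)"
    then obtain r where r: "0 < r" "r \<le> c/2" "z = cpar (\<sigma> * r)" by (auto simp: A_def)
    have "E2 z = cpar (\<sigma> * (2*r))" using r cpar_sq[of "\<sigma> * r"] by (simp add: algebra_simps)
    moreover have "0 < 2*r" "2*r \<le> c" using r by auto
    ultimately show "z \<in> E2 -` A c \<inter> circ" using r by (auto simp: A_def)
  qed
  have step: "measure M (A c - A (c/2)) = 0" if "0 < c" "c \<le> b" for c
  proof -
    have mc: "A c \<in> sets M" and mc2: "A (c/2) \<in> sets M" using meas that b by auto
    have mp: "E2 -` A c \<inter> circ \<in> sets M" using E2meas[OF mc] .
    have e1: "measure M (E2 -` A c \<inter> circ) = measure M (A c)" using inv mc spM by auto
    have "measure M (E2 -` A c \<inter> circ) \<le> measure M (A (c/2) \<union> (circ - F))"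
      by (intro finite_measure_mono pre that sets.Un mc2) (use nullF in auto)
    also have "\<dots> = measure M (A (c/2))" using measure_Un_null_set[OF mc2 nullF] .
    finally have le1: "measure M (A c) \<le> measure M (A (c/2))" using e1 by simp
    have le2: "measure M (A (c/2)) \<le> measure M (A c)"
      using finite_measure_mono[OF pre2[OF that(1)] mp] e1 by simp
    have sub: "A (c/2) \<subseteq> A c" using that by (auto simp: A_def)
    have "measure M (A c - A (c/2)) = measure M (A c) - measure M (A (c/2))"
      by (rule finite_measure_Diff[OF mc mc2 sub])
    then show ?thesis using le1 le2 by simp
  qed
  have mA: "A (b/2^n) \<in> sets M" for n::nat
  proof -
    have "b/2^n \<le> b" using b by (simp add: divide_le_eq one_le_power order.trans)
    then have "b/2^n < 1" using b by linarith
    moreover have "0 < b/2^n" using b by simp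
    ultimately show ?thesis using meas[of "b/2^n"] by blast
  qed
  have ind: "measure M (A b - A (b/2^n)) = 0" for n::nat
  proof (induction n)
    case 0
    then show ?case by simp
  next
    case (Suc n)
    have hb: "b/2^n \<le> b" using b by (simp add: divide_le_eq one_le_power order.trans)
    have eqh: "b/2^Suc n = b/2^n/2" by simp
    have m0: "A b \<in> sets M" using mA[of 0] by simp
    have m1: "A (b/2^n) \<in> sets M" using mA[of n] .
    have m2: "A (b/2^n/2) \<in> sets M" using mA[of "Suc n"] unfolding eqh .
    have "A b - A (b/2^n/2) \<subseteq> (A b - A (b/2^n)) \<union> (A (b/2^n) - A (b/2^n/2))"
      by auto
    then have "measure M (A b - A (b/2^n/2)) \<le> measure M ((A b - A (b/2^n)) \<union> (A (b/2^n) - A (b/2^n/2)))"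
      using m0 m1 m2 by (intro finite_measure_mono) auto
    also have "\<dots> \<le> measure M (A b - A (b/2^n)) + measure M (A (b/2^n) - A (b/2^n/2))"
      using m0 m1 m2 by (intro measure_Un_le) auto
    also have "\<dots> = 0" using Suc.IH step[of "b/2^n"] b hb by simp
    finally show ?case using measure_nonneg[of M "A b - A (b/2^n/2)"] unfolding eqh by linarith
  qed
  have nulln: "A b - A (b/2^n) \<in> null_sets M" for n::nat
  proof -
    have m: "A b - A (b/2^n) \<in> sets M" using mA[of 0] mA[of n] by auto
    then have "emeasure M (A b - A (b/2^n)) = 0" using ind[of n] emeasure_eq_measure by simp
    then show ?thesis using m by auto
  qed
  have cover: "A b = (\<Union>n. A b - A (b/2^n))"
  proof
    show "A b \<subseteq> (\<Union>n. A b - A (b/2^n))"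
    proof
      fix z assume z: "z \<in> A b"
      then obtain r where r: "0 < r" "r \<le> b" "z = cpar (\<sigma> * r)" by (auto simp: A_def)
      obtain n::nat where n: "b/r < 2^n" using real_arch_pow[of 2 "b/r"] by auto
      then have bn: "b/2^n < r" using r by (simp add: divide_less_eq mult.commute)
      have "z \<notin> A (b/2^n)"
      proof
        assume "z \<in> A (b/2^n)"
        then obtain r' where r': "0 < r'" "r' \<le> b/2^n" "z = cpar (\<sigma> * r')" by (auto simp: A_def)
        have "r = r'" using inj[of r r'] r r' bn b by auto
        then show False using bn r' by simp
      qed
      then show "z \<in> (\<Union>n. A b - A (b/2^n))" using z by blast
    qed
  qed auto
  have "(\<Union>n. A b - A (b/2^n)) \<in> null_sets M" using null_sets_UN[OF nulln] .
  then show ?thesis using cover by (simp add: A_def)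
qed

lemma int01: "0 \<le> real_of_int k \<Longrightarrow> real_of_int k \<le> 1 \<Longrightarrow> k = 0 \<or> k = 1"
proof -
  assume "0 \<le> real_of_int k" "real_of_int k \<le> 1"
  then have "0 \<le> k" "k \<le> 1" by linarith+
  then show ?thesis by auto
qed

lemma int_strict01: "0 < real_of_int k \<Longrightarrow> real_of_int k < 1 \<Longrightarrow> False"
proof -
  assume "0 < real_of_int k" "real_of_int k < 1"
  then have "0 < k" "k < 1" by linarith+
  then show False by auto
qed

lemma support_null:
  fixes M :: "complex measure"
  assumes sM: "sets M = sets (restrict_space borel circ)" and spM: "space M = circ"
    and sup: "support M \<subseteq> F" and cF: "closed F"
  shows "circ - F \<in> null_sets M"
proof -
  define \<F> where "\<F> = {U. open U \<and> emeasure M (U \<inter> circ) = 0}"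
  have cov: "circ - F \<subseteq> \<Union>\<F>"
  proof
    fix y assume y: "y \<in> circ - F"
    then have "y \<notin> support M" using sup by auto
    then obtain U where U: "open U" "y \<in> U" "\<not> emeasure M (U \<inter> space M) > 0"
      using y spM unfolding support_def by auto
    then have "emeasure M (U \<inter> circ) = 0" using spM by (simp add: not_gr_zero)
    then show "y \<in> \<Union>\<F>" using U unfolding \<F>_def by blast
  qed
  obtain \<F>' where F': "\<F>' \<subseteq> \<F>" "countable \<F>'" "\<Union>\<F>' = \<Union>\<F>"
    using Lindelof[of \<F>] unfolding \<F>_def by blast
  have "(\<Union>U\<in>\<F>'. U \<inter> circ) \<in> null_sets M"
  proof (rule null_sets_UN'[OF F'(2)])
    fix U assume "U \<in> \<F>'"
    then have U: "open U" "emeasure M (U \<inter> circ) = 0" using F'(1) unfolding \<F>_def by auto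
    have "U \<inter> circ \<in> sets borel" using U(1) circ_borel by auto
    then have "U \<inter> circ \<in> sets M" using sets_M_iff[OF sM] by auto
    then show "U \<inter> circ \<in> null_sets M" using U(2) by auto
  qed
  moreover have "circ - F \<in> sets M"
  proof -
    have "circ - F \<in> sets borel" using cF circ_borel by auto
    then show ?thesis using sets_M_iff[OF sM] by auto
  qed
  moreover have "circ - F \<subseteq> (\<Union>U\<in>\<F>'. U \<inter> circ)" using cov F'(3) by auto
  ultimately show ?thesis using null_sets_subset by blast
qed

lemma sup_side:
  fixes \<sigma> :: real
  assumes cF: "closed F" and one: "1 \<in> F" and sig: "\<sigma> = 1 \<or> \<sigma> = -1"
  obtains b where "0 \<le> b" "b \<le> 1" "\<forall>r. 0 \<le> r \<and> r < b \<longrightarrow> cpar (\<sigma> * r) \<in> F"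
    "cpar (\<sigma> * b) \<in> F" "\<forall>t. b < t \<and> t \<le> 1 \<longrightarrow> (\<exists>t'. b < t' \<and> t' \<le> t \<and> cpar (\<sigma> * t') \<notin> F)"
proof -
  define S where "S = {s. 0 \<le> s \<and> s \<le> 1 \<and> (\<forall>r. 0 \<le> r \<and> r \<le> s \<longrightarrow> cpar (\<sigma> * r) \<in> F)}"
  define b where "b = Sup S"
  have S0: "0 \<in> S" using one by (auto simp: S_def)
  have bdd: "bdd_above S" unfolding S_def by (intro bdd_aboveI[of _ 1]) auto
  have b0: "0 \<le> b" unfolding b_def using cSup_upper[OF S0 bdd] .
  have Sne: "S \<noteq> {}" using S0 by auto
  have b1: "b \<le> 1" unfolding b_def by (rule cSup_least[OF Sne]) (auto simp: S_def)
  have i: "\<forall>r. 0 \<le> r \<and> r < b \<longrightarrow> cpar (\<sigma> * r) \<in> F"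
  proof (intro allI impI)
    fix r assume r: "0 \<le> r \<and> r < b"
    then obtain s where "s \<in> S" "r < s" using less_cSup_iff[of S r] S0 bdd unfolding b_def by auto
    then show "cpar (\<sigma> * r) \<in> F" using r unfolding S_def by auto
  qed
  have ii: "cpar (\<sigma> * b) \<in> F"
  proof (cases "b = 0")
    case True
    then show ?thesis using one by simp
  next
    case False
    then have bp: "0 < b" using b0 by simp
    have ev: "\<forall>\<^sub>F r in at_left b. cpar (\<sigma> * r) \<in> F"
      using eventually_at_left_real[OF bp] by eventually_elim (use i in auto)
    have "continuous (at b within {..<b}) (\<lambda>r. cpar (\<sigma> * r))" unfolding cpar_exp by (intro continuous_intros)
    then have "((\<lambda>r. cpar (\<sigma> * r)) \<longlongrightarrow> cpar (\<sigma> * b)) (at_left b)" by (simp add: continuous_within)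
    from Lim_in_closed_set[OF cF ev trivial_limit_at_left_real this] show ?thesis .
  qed
  have iii: "\<forall>t. b < t \<and> t \<le> 1 \<longrightarrow> (\<exists>t'. b < t' \<and> t' \<le> t \<and> cpar (\<sigma> * t') \<notin> F)"
  proof (intro allI impI)
    fix t assume t: "b < t \<and> t \<le> 1"
    have "t \<notin> S" using t cSup_upper[OF _ bdd, of t] unfolding b_def by auto
    then obtain r where r: "0 \<le> r" "r \<le> t" "cpar (\<sigma> * r) \<notin> F" using t b0 unfolding S_def by auto
    have "\<not> r < b" using i r by auto
    moreover have "r \<noteq> b" using ii r by auto
    ultimately show "\<exists>t'. b < t' \<and> t' \<le> t \<and> cpar (\<sigma> * t') \<notin> F" using r by force
  qed
  show ?thesis using that b0 b1 i ii iii by blast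
qed

lemma sep:
  assumes conn: "connected P" and one: "1 \<in> P" and PF: "P \<subseteq> F" and Fc: "F \<subseteq> circ"
    and b1: "0 \<le> b1" "\<forall>t. b1 < t \<and> t \<le> 1 \<longrightarrow> (\<exists>t'. b1 < t' \<and> t' \<le> t \<and> cpar (1 * t') \<notin> F)"
    and b2: "0 \<le> b2" "\<forall>t. b2 < t \<and> t \<le> 1 \<longrightarrow> (\<exists>t'. b2 < t' \<and> t' \<le> t \<and> cpar (-1 * t') \<notin> F)"
    and sum: "b1 + b2 < 1"
  shows "P \<subseteq> cpar ` {-b2..b1}"
proof
  fix y assume yP: "y \<in> P"
  show "y \<in> cpar ` {-b2..b1}"
  proof (rule ccontr)
    assume ny: "y \<notin> cpar ` {-b2..b1}"
    have yF: "y \<in> F" using yP PF by auto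
    then obtain t where t: "-b2 \<le> t" "t < -b2 + 1" "y = cpar t" using circ_cpar[of y "-b2"] Fc by auto
    have tb: "b1 < t" using t ny by force
    obtain b' where b': "b1 < b'" "b' \<le> t" "cpar b' \<notin> F" using b1(2) tb t b2(1) by fastforce
    have b't: "b' < t" using b' yF t by (cases "b' = t") auto
    obtain a'' where a'': "b2 < a''" "a'' \<le> 1 - t" "cpar (- a'') \<notin> F"
      using b2(2)[rule_format, of "1 - t"] tb t b1(1) by auto
    have "cpar (- (1 - t)) = y" using t cpar_minus1[of t] by simp
    then have a''t: "a'' < 1 - t" using a'' yF by (cases "a'' = 1 - t") auto
    define a' where "a' = - a''"
    have a': "t - 1 < a'" "a' < - b2" "cpar a' \<notin> F" using a'' a''t by (auto simp: a'_def)
    define U where "U = - (cpar ` {b'..a'+1})"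
    define V where "V = - (cpar ` {a'..b'})"
    have oU: "open U" unfolding U_def
      by (intro open_Compl compact_imp_closed compact_continuous_image cpar_cont compact_Icc)
    have oV: "open V" unfolding V_def
      by (intro open_Compl compact_imp_closed compact_continuous_image cpar_cont compact_Icc)
    have dis: "U \<inter> V \<inter> P = {}"
    proof (rule ccontr)
      assume "U \<inter> V \<inter> P \<noteq> {}"
      then obtain z where z: "z \<in> U" "z \<in> V" "z \<in> P" by auto
      then have "z \<in> circ" using PF Fc by auto
      then obtain r where r: "a' \<le> r" "r < a' + 1" "z = cpar r" using circ_cpar[of z a'] by auto
      show False
      proof (cases "r \<le> b'")
        case True
        then show False using z r unfolding V_def by auto
      next
        case False
        then show False using z r unfolding U_def by auto
      qed
    qed
    have cov: "P \<subseteq> U \<union> V"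
    proof
      fix z assume zP: "z \<in> P"
      show "z \<in> U \<union> V"
      proof (rule ccontr)
        assume "z \<notin> U \<union> V"
        then obtain r1 r2 where r1: "b' \<le> r1" "r1 \<le> a'+1" "z = cpar r1"
          and r2: "a' \<le> r2" "r2 \<le> b'" "z = cpar r2" unfolding U_def V_def by auto
        obtain k where k: "r1 - r2 = real_of_int k" using cpar_eq_int[of r1 r2] r1 r2 by auto
        have "k = 0 \<or> k = 1" using int01[of k] k r1 r2 by auto
        then show False
        proof
          assume "k = 0"
          then have "r1 = b'" using k r1 r2 by auto
          then show False using r1 b' zP PF by auto
        next
          assume "k = 1"
          then have "r2 = a'" using k r1 r2 by auto
          then show False using r2 a' zP PF by auto
        qed
      qed
    qed
    have "1 \<in> U"
    proof -
      have "cpar r \<noteq> 1" if "b' \<le> r" "r \<le> a' + 1" for r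
      proof
        assume "cpar r = 1"
        then have "cpar r = cpar 0" by simp
        then obtain k where "r - 0 = real_of_int k" using cpar_eq_int by blast
        moreover have "0 < r" "r < 1" using that b' a' b1 b2 by auto
        ultimately show False using int_strict01 by auto
      qed
      then show ?thesis unfolding U_def by auto
    qed
    then have n1: "U \<inter> P \<noteq> {}" using one by auto
    have "y \<in> V"
    proof -
      have "cpar r \<noteq> y" if "a' \<le> r" "r \<le> b'" for r
      proof
        assume "cpar r = y"
        then have "cpar t = cpar r" using t by simp
        then obtain k where "t - r = real_of_int k" using cpar_eq_int by blast
        moreover have "0 < t - r" "t - r < 1" using that b't a' by auto
        ultimately show False using int_strict01 by auto
      qed
      note nr = this
      have "y \<notin> cpar ` {a'..b'}"
      proof
        assume "y \<in> cpar ` {a'..b'}"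
        then obtain r where "r \<in> {a'..b'}" "y = cpar r" by blast
        then show False using nr[of r] by simp
      qed
      then show ?thesis unfolding V_def by simp
    qed
    then have n2: "V \<inter> P \<noteq> {}" using yP by auto
    from connectedD[OF conn oU oV dis cov] n1 n2 show False by auto
  qed
qed

theorem proposition4:
  fixes M :: "complex measure" and F :: "complex set"
  assumes "prob_space M"
    and "sets M = sets (restrict_space borel circ)"
    and "space M = circ"
    and "\<forall>A\<in>sets M. measure M (E2 -` A \<inter> space M) = measure M A"
    and "flower F"
    and "support M \<subseteq> F"
    and "measure M (connected_component_set F 1) > 0"
  shows "measure M {1} > 0"
proof -
  interpret prob_space M by fact
  note sM = assms(2) and spM = assms(3) and inv = assms(4)
  obtain \<eta> where ps: "preimage_selector \<eta>" and Fd: "F = closure (\<eta> ` circ)"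
    using assms(5) unfolding flower_def by auto
  have cF: "closed F" using Fd by simp
  have Fc: "F \<subseteq> circ"
  proof -
    have "\<eta> ` circ \<subseteq> circ" using ps by (simp add: preimage_selector_def)
    moreover have "closed circ" unfolding circ_def by simp
    ultimately show ?thesis unfolding Fd by (rule closure_minimal)
  qed
  define P where "P = connected_component_set F 1"
  have mP: "measure M P > 0" using assms(7) by (simp add: P_def)
  have Pm: "P \<in> sets M"
  proof (rule ccontr)
    assume "P \<notin> sets M"
    then have "measure M P = 0" by (simp add: measure_notin_sets)
    then show False using mP by simp
  qed
  have "P \<noteq> {}" using mP by auto
  then have oneF: "1 \<in> F" unfolding P_def using connected_component_eq_empty by blast
  have nullF: "circ - F \<in> null_sets M" by (rule support_null[OF sM spM assms(6) cF])
  obtain b1 where b1: "0 \<le> b1" "b1 \<le> 1" "\<forall>r. 0 \<le> r \<and> r < b1 \<longrightarrow> cpar (1 * r) \<in> F"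
    "cpar (1 * b1) \<in> F" "\<forall>t. b1 < t \<and> t \<le> 1 \<longrightarrow> (\<exists>t'. b1 < t' \<and> t' \<le> t \<and> cpar (1 * t') \<notin> F)"
    using sup_side[OF cF oneF, of 1] by auto
  obtain b2 where b2: "0 \<le> b2" "b2 \<le> 1" "\<forall>r. 0 \<le> r \<and> r < b2 \<longrightarrow> cpar (-1 * r) \<in> F"
    "cpar (-1 * b2) \<in> F" "\<forall>t. b2 < t \<and> t \<le> 1 \<longrightarrow> (\<exists>t'. b2 < t' \<and> t' \<le> t \<and> cpar (-1 * t') \<notin> F)"
    using sup_side[OF cF oneF, of "-1"] by auto
  have sub1: "\<forall>r. 0 < r \<and> r < b1 \<longrightarrow> cpar r \<in> closure (\<eta> ` circ)" using b1(3) Fd by auto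
  have sub2: "\<forall>r. -b2 < r \<and> r < 0 \<longrightarrow> cpar r \<in> closure (\<eta> ` circ)"
  proof (intro allI impI)
    fix r assume r: "-b2 < r \<and> r < 0"
    then have "cpar (-1 * (-r)) \<in> F" using b2(3)[rule_format, of "-r"] by auto
    then show "cpar r \<in> closure (\<eta> ` circ)" using Fd by simp
  qed
  have H1: "\<forall>s. 0 < s \<and> s < b1 \<longrightarrow> - cpar (1 * s) \<notin> F"
    using lemC[OF ps sub1] Fd by auto
  have H2: "\<forall>s. 0 < s \<and> s < b2 \<longrightarrow> - cpar (-1 * s) \<notin> F"
  proof (intro allI impI)
    fix s assume s: "0 < s \<and> s < b2"
    then have "- cpar (-s) \<notin> closure (\<eta> ` circ)" using lemC[OF ps sub2, of "-s"] by auto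
    then show "- cpar (-1 * s) \<notin> F" using Fd by simp
  qed
  have b1h: "b1 \<le> 1/2"
  proof (rule ccontr)
    assume "\<not> b1 \<le> 1/2"
    define s where "s = (b1 - 1/2)/2"
    have s: "0 < s" "s < b1" "s + 1/2 < b1" using \<open>\<not> b1 \<le> 1/2\<close> unfolding s_def by (auto simp: field_simps)
    have "cpar (1 * (s + 1/2)) \<in> F" using b1(3) s by auto
    then have "- cpar (1 * s) \<in> F" using cpar_half[of s] by simp
    then show False using H1 s by auto
  qed
  have b2h: "b2 \<le> 1/2"
  proof (rule ccontr)
    assume "\<not> b2 \<le> 1/2"
    define s where "s = (b2 - 1/2)/2"
    have s: "0 < s" "s < b2" "s + 1/2 < b2" using \<open>\<not> b2 \<le> 1/2\<close> unfolding s_def by (auto simp: field_simps)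
    have "cpar (-1 * (s + 1/2)) \<in> F" using b2(3)[rule_format, of "s + 1/2"] s by linarith
    moreover have "cpar (-1 * (s + 1/2)) = - cpar (-1 * s)"
    proof -
      have "cpar (-1 * (s + 1/2)) = cpar ((-s - 1/2) + 1)" using cpar_plus1[of "-s - 1/2"] by simp
      also have "\<dots> = cpar (-s + 1/2)" by (simp add: algebra_simps)
      also have "\<dots> = - cpar (-s)" by (rule cpar_half)
      finally show ?thesis by simp
    qed
    ultimately have "- cpar (-1 * s) \<in> F" by simp
    then show False using H2 s by auto
  qed
  have bsum: "b1 + b2 < 1"
  proof (rule ccontr)
    assume "\<not> b1 + b2 < 1"
    then have bb: "b1 = 1/2" "b2 = 1/2" using b1h b2h by auto
    have "cpar (-1 * (1/4)) \<in> F" using b2(3)[rule_format, of "1/4"] bb by linarith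
    moreover have "cpar (-1 * (1/4)) = - cpar (1 * (1/4))"
    proof -
      have "cpar (-1 * (1/4)) = cpar (3/4 - 1)" by simp
      also have "\<dots> = cpar (3/4)" by (rule cpar_minus1)
      also have "\<dots> = cpar (1/4 + 1/2)" by simp
      also have "\<dots> = - cpar (1/4)" by (rule cpar_half)
      finally show ?thesis by simp
    qed
    ultimately have "- cpar (1 * (1/4)) \<in> F" by simp
    then show False using H1 bb by auto
  qed
  have PF: "P \<subseteq> F" unfolding P_def by (rule connected_component_subset)
  have Pcon: "connected P" unfolding P_def by (rule connected_connected_component)
  have oneP: "1 \<in> P" unfolding P_def using oneF by simp
  have Psub: "P \<subseteq> cpar ` {-b2..b1}"
    by (rule sep[OF Pcon oneP PF Fc b1(1) b1(5) b2(1) b2(5) bsum])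
  define N1 where "N1 = (\<lambda>r. cpar (1 * r)) ` {0<..b1}"
  define N2 where "N2 = (\<lambda>r. cpar (-1 * r)) ` {0<..b2}"
  have N1: "N1 \<in> null_sets M"
  proof (cases "b1 = 0")
    case True
    then show ?thesis by (simp add: N1_def)
  next
    case False
    then show ?thesis unfolding N1_def
      by (intro side_null[OF assms(1) sM spM inv nullF]) (use b1 b1h H1 in auto)
  qed
  have N2: "N2 \<in> null_sets M"
  proof (cases "b2 = 0")
    case True
    then show ?thesis by (simp add: N2_def)
  next
    case False
    then show ?thesis unfolding N2_def
      by (intro side_null[OF assms(1) sM spM inv nullF]) (use b2 b2h H2 in auto)
  qed
  have cov: "cpar ` {-b2..b1} \<subseteq> {1} \<union> (N1 \<union> N2)"
  proof
    fix z assume "z \<in> cpar ` {-b2..b1}"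
    then obtain r where r: "-b2 \<le> r" "r \<le> b1" "z = cpar r" by auto
    consider "r = 0" | "0 < r" | "r < 0" by linarith
    then show "z \<in> {1} \<union> (N1 \<union> N2)"
    proof cases
      case 1 then show ?thesis using r by simp
    next
      case 2
      then have "z \<in> N1" unfolding N1_def using r by (intro image_eqI[of _ _ r]) auto
      then show ?thesis by simp
    next
      case 3
      then have "z \<in> N2" unfolding N2_def using r by (intro image_eqI[of _ _ "-r"]) auto
      then show ?thesis by simp
    qed
  qed
  have one_m: "{1} \<in> sets M"
  proof -
    have "{1::complex} \<in> sets borel" by simp
    moreover have "{1::complex} \<subseteq> circ" by (simp add: circ_def)
    ultimately show ?thesis using sets_M_iff[OF sM] by auto
  qed
  have NN: "N1 \<union> N2 \<in> null_sets M" using N1 N2 by auto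
  have um: "{1} \<union> (N1 \<union> N2) \<in> sets M" using one_m N1 N2 by (intro sets.Un) auto
  have "measure M P \<le> measure M ({1} \<union> (N1 \<union> N2))"
    using Psub cov by (intro finite_measure_mono[OF _ um]) auto
  also have "\<dots> = measure M {1}" by (rule measure_Un_null_set[OF one_m NN])
  finally show ?thesis using mP by simp
qed

end
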